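(* Let $p$ be a strongly productive ultrafilter on a semigroup $S$. If $\mathrm{FP}(\vec{x})\in p$ for some sequence $\vec{x}$ in $S$ satisfying the ordered uniqueness of finite products, then $p$ is sparse (indeed multiplicatively isomorphic to an ordered union ultrafilter).
   Context: For a sequence $\vec{x}=(x_n)_{n\in\omega}$ in $S$, $\mathrm{FP}(\vec{x})$ is the set of products $\prod_{i\in a}x_i$ (increasing order of indices), $a$ a finite nonempty subset of $\omega$; $p$ is strongly productive if every $A\in p$ contains some $\mathrm{FP}(\vec{x})\in p$. $\mathbb{F}$ is the partial semigroup of finite nonempty subsets of $\omega$ with $ab=a\cup b$ defined iff $\max a<\min b$. $\vec{x}$ satisfies the ordered uniqueness of finite products if $f:\mathbb{F}\to\mathrm{FP}(\vec{x})$, $f(a)=\prod_{i\in a}x_i$, is injective and whenever $a,b\in\mathbb{F}$ satisfy $f(a)f(b)\in\mathrm{FP}(\vec{x})$, one has $\max a<\min b$. An ordered union ultrafilter is a strongly productive ultrafilter on the partial semigroup $\mathbb{F}$; $p$ is multiplicatively isomorphic to one if for some $\vec{x}$ the map $f$ above is injective and $\{f^{-1}[A]:A\in p\}$ is an ordered union ultrafilter. $p$ is sparse if for every $A\in p$ there are a sequence $\vec{x}$ in $S$ and a subsequence $\vec{y}=(x_{k_n})_n$ ($k_0<k_1<\cdots$) with $\mathrm{FP}(\vec{y})\in p$, $\mathrm{FP}(\vec{x})\subseteq A$, and $\{k_n:n\in\omega\}$ coinfinite in $\omega$. *)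

theory Defs
  imports Main
begin

definition ultrafilter_on :: "'b set \<Rightarrow> 'b set set \<Rightarrow> bool" where
  "ultrafilter_on X p \<longleftrightarrow>
     p \<subseteq> Pow X \<and> X \<in> p \<and> {} \<notin> p \<and>
     (\<forall>A B. A \<in> p \<and> A \<subseteq> B \<and> B \<subseteq> X \<longrightarrow> B \<in> p) \<and>
     (\<forall>A B. A \<in> p \<and> B \<in> p \<longrightarrow> A \<inter> B \<in> p) \<and>
     (\<forall>A. A \<subseteq> X \<longrightarrow> A \<in> p \<or> X - A \<in> p)"

definition FinSets :: "nat set set" where
  "FinSets = {a. finite a \<and> a \<noteq> {}}"

definition oprod :: "(nat \<Rightarrow> 'a::semigroup_mult) \<Rightarrow> nat set \<Rightarrow> 'a" where
  "oprod x a = (let l = sorted_list_of_set a in foldl (*) (x (hd l)) (map x (tl l)))"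

definition FP :: "(nat \<Rightarrow> 'a::semigroup_mult) \<Rightarrow> 'a set" where
  "FP x = oprod x ` FinSets"

definition strongly_productive :: "'a::semigroup_mult set set \<Rightarrow> bool" where
  "strongly_productive p \<longleftrightarrow> ultrafilter_on UNIV p \<and>
     (\<forall>A\<in>p. \<exists>x. FP x \<subseteq> A \<and> FP x \<in> p)"

definition ordered_uniqueness :: "(nat \<Rightarrow> 'a::semigroup_mult) \<Rightarrow> bool" where
  "ordered_uniqueness x \<longleftrightarrow> inj_on (oprod x) FinSets \<and>
     (\<forall>a\<in>FinSets. \<forall>b\<in>FinSets. oprod x a * oprod x b \<in> FP x \<longrightarrow> Max a < Min b)"

text \<open>Sequences in F all of whose finite ordered products are defined (block sequences),
  and their finite products (= finite unions) in the partial semigroup F.\<close>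
definition block_seq :: "(nat \<Rightarrow> nat set) \<Rightarrow> bool" where
  "block_seq y \<longleftrightarrow> (\<forall>n. y n \<in> FinSets) \<and> (\<forall>n. Max (y n) < Min (y (Suc n)))"

definition FU :: "(nat \<Rightarrow> nat set) \<Rightarrow> nat set set" where
  "FU y = (\<lambda>a. \<Union>i\<in>a. y i) ` FinSets"

definition ordered_union_uf :: "nat set set set \<Rightarrow> bool" where
  "ordered_union_uf q \<longleftrightarrow> ultrafilter_on FinSets q \<and>
     (\<forall>A\<in>q. \<exists>y. block_seq y \<and> FU y \<subseteq> A \<and> FU y \<in> q)"

definition mult_iso_OU :: "'a::semigroup_mult set set \<Rightarrow> bool" where
  "mult_iso_OU p \<longleftrightarrow> (\<exists>x. inj_on (oprod x) FinSets \<and>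
     ordered_union_uf ((\<lambda>A. FinSets \<inter> oprod x -` A) ` p))"

definition sparse :: "'a::semigroup_mult set set \<Rightarrow> bool" where
  "sparse p \<longleftrightarrow> (\<forall>A\<in>p. \<exists>x k. strict_mono k \<and> FP (x \<circ> k) \<in> p \<and> FP x \<subseteq> A \<and>
     infinite (UNIV - range k))"

end

theory Submission imports Defs begin

lemma sl_union:
  assumes "finite a" "finite c" "\<forall>u\<in>a. \<forall>v\<in>c. u < v"
  shows "sorted_list_of_set (a \<union> c) = sorted_list_of_set a @ sorted_list_of_set (c::nat set)"
proof (rule strict_sorted_equal)
  show "sorted_wrt (<) (sorted_list_of_set (a \<union> c))" by simp
  show "sorted_wrt (<) (sorted_list_of_set a @ sorted_list_of_set c)"
    using assms by (simp add: sorted_wrt_append)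
  show "set (sorted_list_of_set (a \<union> c)) = set (sorted_list_of_set a @ sorted_list_of_set c)"
    using assms by simp
qed

lemma foldl_mult_assoc:
  "foldl (*) (a * b) l = (a::'a::semigroup_mult) * foldl (*) b l"
  by (induction l arbitrary: b) (auto simp: mult.assoc)

lemma oprod_singleton[simp]: "oprod x {n} = x n"
  by (simp add: oprod_def)

lemma oprod_union:
  assumes "a \<in> FinSets" "c \<in> FinSets" "\<forall>u\<in>a. \<forall>v\<in>c. u < v"
  shows "oprod x (a \<union> c) = oprod x a * oprod x c"
proof -
  obtain l1 where l1: "sorted_list_of_set a = l1" "l1 \<noteq> []"
    using assms by (auto simp: FinSets_def)
  obtain h t where ht: "sorted_list_of_set c = h # t"
    using assms by (cases "sorted_list_of_set c") (auto simp: FinSets_def)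
  have "oprod x (a \<union> c) = foldl (*) (x (hd l1)) (map x (tl l1) @ map x (h # t))"
    using assms l1 ht by (simp add: oprod_def sl_union FinSets_def)
  also have "\<dots> = foldl (*) (oprod x a * x h) (map x t)"
    using l1 by (simp add: oprod_def)
  also have "\<dots> = oprod x a * oprod x c"
    using ht by (simp add: oprod_def foldl_mult_assoc)
  finally show ?thesis .
qed


lemma block_lt:
  assumes "block_seq e" "i < j"
  shows "Max (e i) < Min (e j)"
  using assms(2)
proof (induction j)
  case 0 then show ?case by simp
next
  case (Suc j)
  have f: "e j \<in> FinSets" "e (Suc j) \<in> FinSets" using assms(1) by (auto simp: block_seq_def)
  have m: "Max (e j) < Min (e (Suc j))" using assms(1) by (auto simp: block_seq_def)
  have "Min (e j) \<le> Max (e j)" using f by (auto simp: FinSets_def)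
  then show ?case using Suc m by (cases "i = j") auto
qed

lemma block_lt_elems:
  assumes "block_seq e" "i < j" "u \<in> e i" "v \<in> e j"
  shows "u < v"
proof -
  have f: "e i \<in> FinSets" "e j \<in> FinSets" using assms(1) by (auto simp: block_seq_def)
  have "u \<le> Max (e i)" "Min (e j) \<le> v" using f assms by (auto simp: FinSets_def)
  then show ?thesis using block_lt[OF assms(1,2)] by simp
qed

lemma union_FinSets:
  assumes "block_seq e" "s \<in> FinSets"
  shows "(\<Union>i\<in>s. e i) \<in> FinSets"
  using assms by (auto simp: FinSets_def block_seq_def)

lemma oprod_blocks:
  assumes "block_seq e" "s \<in> FinSets"
  shows "oprod y (\<Union>i\<in>s. e i) = oprod (\<lambda>n. oprod y (e n)) s"
  using assms(2)
proof (induction "card s" arbitrary: s rule: less_induct)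
  case less
  have fs: "finite s" "s \<noteq> {}" using less.prems by (auto simp: FinSets_def)
  define m where "m = Max s"
  have ms: "m \<in> s" using fs by (simp add: m_def)
  show ?case
  proof (cases "s = {m}")
    case True then show ?thesis by simp
  next
    case False
    define s' where "s' = s - {m}"
    have s'F: "s' \<in> FinSets" using False fs ms by (auto simp: s'_def FinSets_def)
    have lt: "\<forall>u\<in>s'. u < m" unfolding s'_def m_def using Max_ge[OF fs(1)] by (metis DiffE le_neq_implies_less singletonI)
    have ss: "s = s' \<union> {m}" using ms by (auto simp: s'_def)
    have cs: "card s' < card s" using fs ms by (simp add: s'_def card_gt_0_iff)
    have IH: "oprod y (\<Union>i\<in>s'. e i) = oprod (\<lambda>n. oprod y (e n)) s'"
      using less.hyps[OF cs s'F] .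
    have em: "e m \<in> FinSets" using assms(1) by (auto simp: block_seq_def)
    have ord: "\<forall>u\<in>(\<Union>i\<in>s'. e i). \<forall>v\<in>e m. u < v"
      using lt block_lt_elems[OF assms(1)] by blast
    have "(\<Union>i\<in>s. e i) = (\<Union>i\<in>s'. e i) \<union> e m" using ss by auto
    then have "oprod y (\<Union>i\<in>s. e i) = oprod y (\<Union>i\<in>s'. e i) * oprod y (e m)"
      using oprod_union[OF union_FinSets[OF assms(1) s'F] em ord] by simp
    also have "\<dots> = oprod (\<lambda>n. oprod y (e n)) s' * oprod (\<lambda>n. oprod y (e n)) {m}"
      using IH by simp
    also have "\<dots> = oprod (\<lambda>n. oprod y (e n)) s"
      using oprod_union[OF s'F, of "{m}", where x="\<lambda>n. oprod y (e n)"] lt ss by (simp add: FinSets_def)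
    finally show ?thesis .
  qed
qed

lemma FP_blocks:
  assumes "block_seq e"
  shows "FP (\<lambda>n. oprod y (e n)) = oprod y ` FU e"
proof -
  have "FP (\<lambda>n. oprod y (e n)) = (\<lambda>s. oprod y (\<Union>i\<in>s. e i)) ` FinSets"
    unfolding FP_def using oprod_blocks[OF assms] by (auto simp: image_iff)
  then show ?thesis by (simp add: FU_def image_image)
qed

lemma FU_sub: "block_seq e \<Longrightarrow> FU e \<subseteq> FinSets"
  unfolding FU_def using union_FinSets by blast


definition comps :: "nat set \<Rightarrow> nat" where
  "comps a = card {i\<in>a. Suc i \<notin> a}"

lemma comps_union:
  assumes "a \<in> FinSets" "c \<in> FinSets" "\<forall>u\<in>a. \<forall>v\<in>c. u < v"
  shows "comps (a \<union> c) + (if Suc (Max a) = Min c then 1 else 0) = comps a + comps c"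
proof -
  have fa: "finite a" "a \<noteq> {}" and fc: "finite c" "c \<noteq> {}" using assms by (auto simp: FinSets_def)
  have Ma: "Max a \<in> a" "\<And>i. i \<in> a \<Longrightarrow> i \<le> Max a" using fa by auto
  have Mc: "Min c \<in> c" "\<And>i. i \<in> c \<Longrightarrow> Min c \<le> i" using fc by auto
  have lt: "Max a < Min c" using assms(3) Ma Mc by blast
  have key: "\<And>i. i \<in> a \<Longrightarrow> Suc i \<in> c \<longleftrightarrow> (i = Max a \<and> Suc (Max a) = Min c)"
  proof
    fix i assume i: "i \<in> a" "Suc i \<in> c"
    have "Max a < Suc i" using assms(3) Ma i by blast
    then have "i = Max a" using Ma i by force
    moreover have "Min c \<le> Suc i" using Mc i by blast
    ultimately show "i = Max a \<and> Suc (Max a) = Min c" using lt by simp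
  next
    fix i assume "i \<in> a" "i = Max a \<and> Suc (Max a) = Min c"
    then show "Suc i \<in> c" using Mc by simp
  qed
  have nc: "\<And>i. i \<in> c \<Longrightarrow> Suc i \<notin> a" using assms(3) by (meson less_SucI less_asym)
  have Ra: "Max a \<in> {i\<in>a. Suc i \<notin> a}" using Ma by (metis (mono_tags, lifting) mem_Collect_eq not_less_eq_eq)
  let ?D = "if Suc (Max a) = Min c then {Max a} else {}"
  have eq: "{i\<in>a \<union> c. Suc i \<notin> a \<union> c} = ({i\<in>a. Suc i \<notin> a} - ?D) \<union> {i\<in>c. Suc i \<notin> c}"
    using key nc by auto
  have disj: "({i\<in>a. Suc i \<notin> a} - ?D) \<inter> {i\<in>c. Suc i \<notin> c} = {}" using assms(3) by auto
  have "comps (a \<union> c) = card ({i\<in>a. Suc i \<notin> a} - ?D) + comps c"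
    unfolding comps_def eq using card_Un_disjoint[OF _ _ disj] fa fc by simp
  moreover have "card ({i\<in>a. Suc i \<notin> a} - ?D) + (if Suc (Max a) = Min c then 1 else 0) = comps a"
  proof -
    have fR: "finite {i\<in>a. Suc i \<notin> a}" using fa by simp
    have "card {i\<in>a. Suc i \<notin> a} > 0" using fR Ra card_gt_0_iff by blast
    then show ?thesis unfolding comps_def using card_Diff_singleton[OF Ra] by simp
  qed
  ultimately show ?thesis by simp
qed


lemma sp_uf: "strongly_productive p \<Longrightarrow> ultrafilter_on UNIV p"
  by (simp add: strongly_productive_def)

lemma uf_inter: "ultrafilter_on X p \<Longrightarrow> A \<in> p \<Longrightarrow> B \<in> p \<Longrightarrow> A \<inter> B \<in> p"
  by (simp add: ultrafilter_on_def)

lemma uf_empty: "ultrafilter_on X p \<Longrightarrow> {} \<notin> p"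
  by (simp add: ultrafilter_on_def)

lemma uf_univ_up: "ultrafilter_on UNIV p \<Longrightarrow> A \<in> p \<Longrightarrow> A \<subseteq> B \<Longrightarrow> B \<in> p"
  by (simp add: ultrafilter_on_def)

lemma uf_univ_compl: "ultrafilter_on UNIV p \<Longrightarrow> A \<notin> p \<Longrightarrow> UNIV - A \<in> p"
  unfolding ultrafilter_on_def by blast

lemma FP_singleton: "x n \<in> FP x"
proof -
  have "{n} \<in> FinSets" by (simp add: FinSets_def)
  then show ?thesis unfolding FP_def by (metis image_eqI oprod_singleton)
qed

lemma oprod_pair: "oprod x {n, Suc n} = x n * x (Suc n)"
proof -
  have "oprod x ({n} \<union> {Suc n}) = oprod x {n} * oprod x {Suc n}"
    by (rule oprod_union) (auto simp: FinSets_def)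
  then show ?thesis by (simp add: insert_commute)
qed

lemma extract_blocks:
  assumes sp: "strongly_productive p" and ou: "ordered_uniqueness x"
    and A: "A \<in> p" and Fx: "FP x \<in> p"
  shows "\<exists>z. block_seq z \<and> FP (\<lambda>n. oprod x (z n)) \<subseteq> A \<and> FP (\<lambda>n. oprod x (z n)) \<in> p"
proof -
  have uf: "ultrafilter_on UNIV p" using sp sp_uf by blast
  have "A \<inter> FP x \<in> p" using uf_inter[OF uf A Fx] .
  then obtain u where u: "FP u \<subseteq> A \<inter> FP x" "FP u \<in> p"
    using sp unfolding strongly_productive_def by blast
  have "\<forall>n. \<exists>a. a \<in> FinSets \<and> u n = oprod x a"
    using u(1) FP_singleton[of u] unfolding FP_def by blast
  then obtain z where z: "\<And>n. z n \<in> FinSets" "\<And>n. u n = oprod x (z n)" by metis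
  have "\<And>n. Max (z n) < Min (z (Suc n))"
  proof -
    fix n
    have "{n, Suc n} \<in> FinSets" by (simp add: FinSets_def)
    then have "oprod u {n, Suc n} \<in> FP u" unfolding FP_def by blast
    then have "oprod x (z n) * oprod x (z (Suc n)) \<in> FP x"
      using u(1) by (auto simp: oprod_pair z(2)[symmetric])
    then show "Max (z n) < Min (z (Suc n))" using ou z(1) unfolding ordered_uniqueness_def by blast
  qed
  then have "block_seq z" using z(1) by (simp add: block_seq_def)
  moreover have "(\<lambda>n. oprod x (z n)) = u" using z(2) by auto
  ultimately show ?thesis using u by auto
qed

lemma Z_inj:
  assumes "block_seq z" "s \<in> FinSets" "t \<in> FinSets" "(\<Union>i\<in>s. z i) = (\<Union>i\<in>t. z i)"
  shows "s = t"
proof -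
  have ne: "\<And>i. z i \<noteq> {}" using assms(1) by (auto simp: block_seq_def FinSets_def)
  have disj: "\<And>i j v. v \<in> z i \<Longrightarrow> v \<in> z j \<Longrightarrow> i = j"
    using block_lt_elems[OF assms(1)] by (metis less_irrefl nat_neq_iff)
  show ?thesis
  proof (rule ccontr)
    assume "s \<noteq> t"
    then obtain i where "i \<in> s \<and> i \<notin> t \<or> i \<in> t \<and> i \<notin> s" by blast
    then show False
    proof
      assume i: "i \<in> s \<and> i \<notin> t"
      obtain v where v: "v \<in> z i" using ne by blast
      then have "v \<in> (\<Union>i\<in>t. z i)" using i assms(4) by blast
      then show False using disj v i by blast
    next
      assume i: "i \<in> t \<and> i \<notin> s"
      obtain v where v: "v \<in> z i" using ne by blast
      then have "v \<in> (\<Union>i\<in>s. z i)" using i assms(4) by blast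
      then show False using disj v i by blast
    qed
  qed
qed

lemma FP_blocks_sub: "block_seq z \<Longrightarrow> FP (\<lambda>n. oprod x (z n)) \<subseteq> FP x"
  using FP_blocks[of z x] FU_sub[of z] unfolding FP_def by blast

lemma OU_transfer:
  assumes ou: "ordered_uniqueness x" and b: "block_seq z"
  shows "ordered_uniqueness (\<lambda>n. oprod x (z n))"
proof -
  let ?y = "\<lambda>n. oprod x (z n)"
  let ?Z = "\<lambda>s. \<Union>i\<in>s. z i"
  have oy: "\<And>s. s \<in> FinSets \<Longrightarrow> oprod ?y s = oprod x (?Z s)"
    using oprod_blocks[OF b, of _ x] by simp
  have inj: "inj_on (oprod x) FinSets" using ou by (simp add: ordered_uniqueness_def)
  have "inj_on (oprod ?y) FinSets"
  proof (rule inj_onI)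
    fix s t assume st: "s \<in> FinSets" "t \<in> FinSets" "oprod ?y s = oprod ?y t"
    then have "?Z s = ?Z t" using oy inj union_FinSets[OF b] by (metis inj_onD)
    then show "s = t" using Z_inj[OF b st(1,2)] by blast
  qed
  moreover have "\<forall>s\<in>FinSets. \<forall>t\<in>FinSets. oprod ?y s * oprod ?y t \<in> FP ?y \<longrightarrow> Max s < Min t"
  proof (intro ballI impI)
    fix s t assume st: "s \<in> FinSets" "t \<in> FinSets" "oprod ?y s * oprod ?y t \<in> FP ?y"
    then have "oprod x (?Z s) * oprod x (?Z t) \<in> FP x"
      using oy FP_blocks_sub[OF b] by auto
    then have lt: "Max (?Z s) < Min (?Z t)"
      using ou union_FinSets[OF b] st unfolding ordered_uniqueness_def by blast
    show "Max s < Min t"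
    proof (rule ccontr)
      assume "\<not> Max s < Min t"
      then have ji: "Min t \<le> Max s" by simp
      have fs: "finite s" "s \<noteq> {}" "finite t" "t \<noteq> {}" using st by (auto simp: FinSets_def)
      have zF: "\<And>i. z i \<in> FinSets" using b by (simp add: block_seq_def)
      let ?i = "Max s" and ?j = "Min t"
      have "Min (z ?j) \<le> Max (z ?i)"
      proof (cases "?j = ?i")
        case True then show ?thesis using zF[of ?i] by (simp add: FinSets_def)
      next
        case False
        then have "?j < ?i" using ji by simp
        then have "Max (z ?j) < Min (z ?i)" using block_lt[OF b] by blast
        moreover have "Min (z ?j) \<le> Max (z ?j)" "Min (z ?i) \<le> Max (z ?i)"
          using zF[of ?j] zF[of ?i] by (auto simp: FinSets_def)
        ultimately show ?thesis by simp
      qed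
      moreover have "Max (z ?i) \<le> Max (?Z s)"
      proof -
        have "?i \<in> s" using fs by simp
        moreover have "Max (z ?i) \<in> z ?i" using zF[of ?i] by (simp add: FinSets_def)
        ultimately have "Max (z ?i) \<in> ?Z s" by blast
        then show ?thesis using union_FinSets[OF b st(1)] by (simp add: FinSets_def)
      qed
      moreover have "Min (?Z t) \<le> Min (z ?j)"
      proof -
        have "?j \<in> t" using fs by simp
        moreover have "Min (z ?j) \<in> z ?j" using zF[of ?j] by (simp add: FinSets_def)
        ultimately have "Min (z ?j) \<in> ?Z t" by blast
        then show ?thesis using union_FinSets[OF b st(2)] by (simp add: FinSets_def)
      qed
      ultimately show False using lt by simp
    qed
  qed
  ultimately show ?thesis by (simp add: ordered_uniqueness_def)
qed


lemma pre_image: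
  assumes "inj_on f FinSets" "B \<subseteq> FinSets"
  shows "FinSets \<inter> f -` (f ` B) = B"
  using assms by (auto dest: inj_onD)

lemma iso_part:
  assumes sp: "strongly_productive p" and ou: "ordered_uniqueness x" and Fx: "FP x \<in> p"
  shows "mult_iso_OU p"
proof -
  have uf: "ultrafilter_on UNIV p" using sp sp_uf by blast
  let ?f = "oprod x"
  let ?pre = "\<lambda>A. FinSets \<inter> ?f -` A"
  let ?q = "?pre ` p"
  have inj: "inj_on ?f FinSets" using ou by (simp add: ordered_uniqueness_def)
  have FPx: "FP x = ?f ` FinSets" by (simp add: FP_def)
  have "ultrafilter_on FinSets ?q"
    unfolding ultrafilter_on_def
  proof (intro conjI allI impI)
    show "?q \<subseteq> Pow FinSets" by auto
    show "FinSets \<in> ?q"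
    proof -
      have "UNIV \<in> p" using uf by (simp add: ultrafilter_on_def)
      moreover have "FinSets = ?pre UNIV" by simp
      ultimately show ?thesis by blast
    qed
    show "{} \<notin> ?q"
    proof
      assume "{} \<in> ?q"
      then obtain A where A: "A \<in> p" "?pre A = {}" by auto
      then have "A \<inter> FP x = {}" using FPx by auto
      then show False using uf_inter[OF uf A(1) Fx] uf_empty[OF uf] by simp
    qed
  next
    fix A B assume h: "A \<in> ?q \<and> A \<subseteq> B \<and> B \<subseteq> FinSets"
    then obtain C where C: "C \<in> p" "A = ?pre C" by auto
    have "C \<union> ?f ` B \<in> p" using uf_univ_up[OF uf C(1)] by blast
    moreover have "?pre (C \<union> ?f ` B) = B"
      using pre_image[OF inj, of B] h C(2) by auto
    ultimately show "B \<in> ?q" by (metis (no_types, lifting) image_eqI)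
  next
    fix A B assume h: "A \<in> ?q \<and> B \<in> ?q"
    then obtain C D where "C \<in> p" "A = ?pre C" "D \<in> p" "B = ?pre D" by auto
    moreover then have "C \<inter> D \<in> p" using uf_inter[OF uf] by blast
    moreover have "A \<inter> B = ?pre (C \<inter> D)" using calculation by auto
    ultimately show "A \<inter> B \<in> ?q" by blast
  next
    fix B assume h: "B \<subseteq> FinSets"
    show "B \<in> ?q \<or> FinSets - B \<in> ?q"
    proof (cases "?f ` B \<in> p")
      case True
      then show ?thesis using pre_image[OF inj h] by (metis image_eqI)
    next
      case False
      then have "UNIV - ?f ` B \<in> p" using uf_univ_compl[OF uf] by blast
      moreover have "?pre (UNIV - ?f ` B) = FinSets - B" using pre_image[OF inj h] by auto
      ultimately show ?thesis by (metis image_eqI)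
    qed
  qed
  moreover have "\<forall>A\<in>?q. \<exists>y. block_seq y \<and> FU y \<subseteq> A \<and> FU y \<in> ?q"
  proof
    fix B assume "B \<in> ?q"
    then obtain A where A: "A \<in> p" "B = ?pre A" by auto
    obtain z where z: "block_seq z" "FP (\<lambda>n. oprod x (z n)) \<subseteq> A" "FP (\<lambda>n. oprod x (z n)) \<in> p"
      using extract_blocks[OF sp ou A(1) Fx] by blast
    have img: "?f ` FU z = FP (\<lambda>n. oprod x (z n))" using FP_blocks[OF z(1), of x] by simp
    have sub: "FU z \<subseteq> FinSets" using FU_sub[OF z(1)] .
    have "FU z \<subseteq> B" using A(2) sub img z(2) by auto
    moreover have "FU z \<in> ?q" using pre_image[OF inj sub] img z(3) by (metis image_eqI)
    ultimately show "\<exists>y. block_seq y \<and> FU y \<subseteq> B \<and> FU y \<in> ?q" using z(1) by blast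
  qed
  ultimately show ?thesis unfolding mult_iso_OU_def ordered_union_uf_def using inj by blast
qed


lemma sparse_part:
  assumes sp: "strongly_productive p" and ou: "ordered_uniqueness x" and Fx: "FP x \<in> p"
  shows "sparse p"
  unfolding sparse_def
proof
  fix A assume A: "A \<in> p"
  have uf: "ultrafilter_on UNIV p" using sp sp_uf by blast
  obtain z where z: "block_seq z" "FP (\<lambda>n. oprod x (z n)) \<subseteq> A" "FP (\<lambda>n. oprod x (z n)) \<in> p"
    using extract_blocks[OF sp ou A Fx] by blast
  define y where "y = (\<lambda>n. oprod x (z n))"
  have yA: "FP y \<subseteq> A" and yp: "FP y \<in> p" using z by (auto simp: y_def)
  have ouy: "ordered_uniqueness y" unfolding y_def by (rule OU_transfer[OF ou z(1)])
  have injy: "inj_on (oprod y) FinSets" using ouy by (simp add: ordered_uniqueness_def)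
  define C where "C j = oprod y ` {a\<in>FinSets. comps a mod 3 = j}" for j
  have "\<exists>j. C j \<in> p"
  proof (rule ccontr)
    assume "\<not> (\<exists>j. C j \<in> p)"
    then have c: "UNIV - C j \<in> p" for j using uf_univ_compl[OF uf] by blast
    have "FP y \<inter> (UNIV - C 0) \<inter> (UNIV - C 1) \<inter> (UNIV - C 2) \<in> p"
      using uf_inter[OF uf, OF uf_inter[OF uf, OF uf_inter[OF uf yp c[of 0]] c[of 1]] c[of 2]] .
    moreover have "FP y \<inter> (UNIV - C 0) \<inter> (UNIV - C 1) \<inter> (UNIV - C 2) = {}"
    proof -
      have "FP y \<subseteq> C 0 \<union> C 1 \<union> C 2"
      proof
        fix t assume "t \<in> FP y"
        then obtain a where a: "a \<in> FinSets" "t = oprod y a" by (auto simp: FP_def)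
        have "comps a mod 3 = 0 \<or> comps a mod 3 = 1 \<or> comps a mod 3 = 2" by presburger
        moreover have "t \<in> C (comps a mod 3)" using a unfolding C_def by blast
        ultimately show "t \<in> C 0 \<union> C 1 \<union> C 2" by (metis UnI1 UnI2)
      qed
      then show ?thesis by blast
    qed
    ultimately show False using uf_empty[OF uf] by simp
  qed
  then obtain j where j: "C j \<in> p" by blast
  obtain b where b: "block_seq b" "FP (\<lambda>n. oprod y (b n)) \<subseteq> C j" "FP (\<lambda>n. oprod y (b n)) \<in> p"
    using extract_blocks[OF sp ouy j yp] by blast
  define v where "v = (\<lambda>n. oprod y (b n))"
  have col: "comps (\<Union>i\<in>s. b i) mod 3 = j" if s: "s \<in> FinSets" for s
  proof -
    have "oprod v s \<in> C j" using b(2) s unfolding v_def FP_def by blast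
    then obtain a where a: "a \<in> FinSets" "comps a mod 3 = j" "oprod v s = oprod y a"
      unfolding C_def by blast
    have "oprod v s = oprod y (\<Union>i\<in>s. b i)" unfolding v_def using oprod_blocks[OF b(1) s, of y] by simp
    then have "a = (\<Union>i\<in>s. b i)" using a injy union_FinSets[OF b(1) s] by (metis inj_onD)
    then show ?thesis using a by simp
  qed
  have bF: "\<And>n. b n \<in> FinSets" using b(1) by (simp add: block_seq_def)
  have c1: "comps (b n) mod 3 = j" for n using col[of "{n}"] by (simp add: FinSets_def)
  have c2: "comps (b n \<union> b m) mod 3 = j" if "n < m" for n m
  proof -
    have "(\<Union>i\<in>{n,m}. b i) = b n \<union> b m" by simp
    then show ?thesis using col[of "{n,m}"] by (simp add: FinSets_def)
  qed
  have cu: "comps (b n \<union> b m) + (if Suc (Max (b n)) = Min (b m) then 1 else 0) = comps (b n) + comps (b m)"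
    if "n < m" for n m
    using comps_union[OF bF bF] block_lt_elems[OF b(1) that] by blast
  have nadj02: "Suc (Max (b 0)) \<noteq> Min (b 2)"
  proof -
    have "Max (b 0) < Min (b 1)" "Max (b 1) < Min (b 2)" using block_lt[OF b(1)] by auto
    moreover have "Min (b 1) \<le> Max (b 1)" using bF[of 1] by (simp add: FinSets_def)
    ultimately show ?thesis by simp
  qed
  have j0: "j = 0"
  proof -
    have "comps (b 0 \<union> b 2) = comps (b 0) + comps (b 2)" using cu[of 0 2] nadj02 by simp
    moreover have "comps (b 0 \<union> b 2) mod 3 = j" using c2[of 0 2] by simp
    ultimately show ?thesis using c1[of 0] c1[of 2] by presburger
  qed
  have gap: "Suc (Max (b n)) < Min (b (Suc n))" for n
  proof -
    have "Suc (Max (b n)) \<noteq> Min (b (Suc n))"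
    proof
      assume h: "Suc (Max (b n)) = Min (b (Suc n))"
      have "comps (b n \<union> b (Suc n)) + 1 = comps (b n) + comps (b (Suc n))"
        using cu[of n "Suc n"] h by simp
      moreover have "comps (b n \<union> b (Suc n)) mod 3 = 0" using c2[of n "Suc n"] j0 by simp
      ultimately show False using c1[of n] c1[of "Suc n"] j0 by presburger
    qed
    moreover have "Max (b n) < Min (b (Suc n))" using block_lt[OF b(1)] by simp
    ultimately show ?thesis by simp
  qed
  define e where "e m = (if even m then b (m div 2) else {Suc (Max (b (m div 2)))})" for m
  have eb: "block_seq e"
    unfolding block_seq_def
  proof (intro conjI allI)
    fix m show "e m \<in> FinSets" using bF by (simp add: e_def FinSets_def)
  next
    fix m show "Max (e m) < Min (e (Suc m))"
    proof (cases "even m")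
      case True
      then have "Suc m div 2 = m div 2" by presburger
      then show ?thesis using True by (simp add: e_def)
    next
      case False
      then have "Suc m div 2 = Suc (m div 2)" by presburger
      then show ?thesis using False gap[of "m div 2"] by (simp add: e_def)
    qed
  qed
  define w where "w = (\<lambda>m. oprod y (e m))"
  define k where "k = (\<lambda>n::nat. 2 * n)"
  have "strict_mono k" unfolding k_def by (simp add: strict_mono_def)
  moreover have "w \<circ> k = v" unfolding w_def k_def v_def e_def by auto
  then have "FP (w \<circ> k) \<in> p" using b(3) v_def by simp
  moreover have "FP w \<subseteq> A"
  proof -
    have "FP w \<subseteq> FP y" unfolding w_def using FP_blocks_sub[OF eb] .
    then show ?thesis using yA by blast
  qed
  moreover have "infinite (UNIV - range k)"
  proof -
    have "range (\<lambda>n. 2 * n + 1) \<subseteq> UNIV - range k" unfolding k_def by auto presburger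
    moreover have "infinite (range (\<lambda>n::nat. 2 * n + 1))"
    proof
      assume "finite (range (\<lambda>n::nat. 2 * n + 1))"
      moreover have "inj (\<lambda>n::nat. 2 * n + 1)" by (simp add: inj_on_def)
      ultimately have "finite (UNIV :: nat set)" using finite_imageD by blast
      then show False by simp
    qed
    ultimately show ?thesis using infinite_super by blast
  qed
  ultimately show "\<exists>x k. strict_mono k \<and> FP (x \<circ> k) \<in> p \<and> FP x \<subseteq> A \<and> infinite (UNIV - range k)"
    by blast
qed

theorem mainTheorem16:
  fixes p :: "'a::semigroup_mult set set" and x :: "nat \<Rightarrow> 'a"
  assumes "strongly_productive p"
    and "ordered_uniqueness x"
    and "FP x \<in> p"
  shows "sparse p \<and> mult_iso_OU p"
  using sparse_part[OF assms] iso_part[OF assms] by blast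

end
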